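(* Let $n\ge3$, $\mathcal{O}\subset\mathbb{R}^n$ bounded open with $C^2$ boundary, and suppose (H1) holds. Then for every $\tau<T$ the operator $A(t)$ is uniformly strongly elliptic on $[\tau,T]$: there exists $C>0$ (depending on $r,\tau,T$) such that $\sum_{j,k=1}^n a_{jk}(t,y)z_jz_k\ge C\|z\|^2_{\mathbb{R}^n}$ for all $(t,y)\in[\tau,T]\times\overline{\mathcal{O}}$ and $z\in\mathbb{R}^n$.
   Context: $r\in C^1(\mathbb{R}\times\overline{\mathcal{O}},\mathbb{R}^n)$ with $r(t,\cdot):\overline{\mathcal{O}}\to r(t,\overline{\mathcal{O}})$ a $C^2$ diffeomorphism for each $t$, inverse $r^{-1}(t,\cdot)=(r^{-1}_1,\dots,r^{-1}_n)$; $a_{jk}(t,y)=\sum_{i=1}^n \frac{\partial r^{-1}_j}{\partial x_i}(t,r(t,y))\frac{\partial r^{-1}_k}{\partial x_i}(t,r(t,y))$; $A(t)v=-\sum_{j,k}\partial_{y_j}(a_{jk}(t,\cdot)\partial_{y_k}v)+\beta v$, $\beta>0$. (H1): $r^{-1}(\cdot,x)$ is $C^1$ in $t$, and there are $h\in C(\mathbb{R})$, $p_{ik}\in C^1(\mathbb{R}^n,\mathbb{R})$ with $\frac{\partial r^{-1}_k}{\partial x_i}(t,r(t,y))=h(t)p_{ik}(y)$ for all $t,y,i,k$; $h$ is Hölder continuous with exponent $\theta\in(0,1]$ and $0<h_0\le h\le h_1$. *)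

theory Defs
  imports "HOL-Analysis.Analysis"
begin

definition pderiv_dir :: "('a::euclidean_space \<Rightarrow> 'b::real_normed_vector) \<Rightarrow> 'a \<Rightarrow> 'a \<Rightarrow> 'b" where
  "pderiv_dir f b x = frechet_derivative f (at x) b"

definition C1_on :: "'a::euclidean_space set \<Rightarrow> ('a \<Rightarrow> 'b::real_normed_vector) \<Rightarrow> bool" where
  "C1_on U f \<longleftrightarrow> (\<forall>x\<in>U. f differentiable (at x)) \<and>
     (\<forall>b\<in>Basis. continuous_on U (\<lambda>x. pderiv_dir f b x))"

definition C2_on :: "'a::euclidean_space set \<Rightarrow> ('a \<Rightarrow> 'b::real_normed_vector) \<Rightarrow> bool" where
  "C2_on U f \<longleftrightarrow> C1_on U f \<and> (\<forall>b\<in>Basis. C1_on U (\<lambda>x. pderiv_dir f b x))"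

definition C1_on_set :: "'a::euclidean_space set \<Rightarrow> ('a \<Rightarrow> 'b::real_normed_vector) \<Rightarrow> bool" where
  "C1_on_set S f \<longleftrightarrow> (\<exists>U. open U \<and> S \<subseteq> U \<and> C1_on U f)"

definition C2_on_set :: "'a::euclidean_space set \<Rightarrow> ('a \<Rightarrow> 'b::real_normed_vector) \<Rightarrow> bool" where
  "C2_on_set S f \<longleftrightarrow> (\<exists>U. open U \<and> S \<subseteq> U \<and> C2_on U f)"

definition C2_boundary :: "(real^'n) set \<Rightarrow> bool" where
  "C2_boundary Om \<longleftrightarrow> (\<forall>x0\<in>frontier Om. \<exists>U \<phi>. open U \<and> x0 \<in> U \<and> C2_on U (\<phi> :: real^'n \<Rightarrow> real) \<and>
      (\<forall>x\<in>U. frechet_derivative \<phi> (at x) \<noteq> (\<lambda>v. 0)) \<and> Om \<inter> U = {x\<in>U. \<phi> x < 0})"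

definition C2_diffeo_with_inverse ::
  "(real^'n) set \<Rightarrow> (real^'n \<Rightarrow> real^'n) \<Rightarrow> (real^'n \<Rightarrow> real^'n) \<Rightarrow> bool" where
  "C2_diffeo_with_inverse S f g \<longleftrightarrow> C2_on_set S f \<and> C2_on_set (f ` S) g \<and>
     (\<forall>y\<in>S. g (f y) = y) \<and> (\<forall>x\<in>f ` S. f (g x) = x)"

definition coeff_a ::
  "(real \<Rightarrow> real^'n \<Rightarrow> real^'n) \<Rightarrow> (real \<Rightarrow> real^'n \<Rightarrow> real^'n) \<Rightarrow> real \<Rightarrow> real^'n \<Rightarrow> 'n \<Rightarrow> 'n \<Rightarrow> real" where
  "coeff_a r rinv t y j k =
     (\<Sum>i\<in>UNIV. (pderiv_dir (rinv t) (axis i 1) (r t y)) $ j * (pderiv_dir (rinv t) (axis i 1) (r t y)) $ k)"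

end

theory Submission
  imports Defs
begin

lemma lin_expand:
  fixes L :: "real^'n \<Rightarrow> real^'m"
  assumes "linear L"
  shows "L w = (\<Sum>i\<in>UNIV. w$i *\<^sub>R L (axis i 1))"
proof -
  have "L w = L (\<Sum>i\<in>UNIV. (w$i) *s axis i 1)" by (simp add: basis_expansion)
  also have "\<dots> = (\<Sum>i\<in>UNIV. w$i *\<^sub>R L (axis i 1))"
    using assms by (simp add: linear_sum linear_scale scalar_mult_eq_scaleR)
  finally show ?thesis .
qed

lemma invert_pos:
  fixes Om U :: "(real^'n) set" and rf ri :: "real^'n \<Rightarrow> real^'n"
    and p :: "'n \<Rightarrow> 'n \<Rightarrow> real^'n \<Rightarrow> real" and c :: real
  assumes "open Om" "open U" "closure Om \<subseteq> U" "C1_on U rf"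
    and ri_diff: "\<And>y. y \<in> closure Om \<Longrightarrow> ri differentiable (at (rf y))"
    and inv: "\<And>y. y \<in> closure Om \<Longrightarrow> ri (rf y) = y"
    and H1: "\<And>y i k. y \<in> closure Om \<Longrightarrow> (pderiv_dir ri (axis i 1) (rf y)) $ k = c * p i k y"
    and pc: "\<And>i k. continuous_on UNIV (p i k)"
    and y: "y \<in> closure Om"
    and z: "\<And>i. (\<Sum>k\<in>UNIV. p i k y * z$k) = 0"
  shows "z = 0"
proof -
  define F where "F b x = (\<chi> k. \<Sum>i\<in>UNIV. (pderiv_dir rf (axis b 1) x)$i * (c * p i k x))" for b x
  have Lexp: "frechet_derivative ri (at (rf x)) w $ k = (\<Sum>i\<in>UNIV. w$i * (c * p i k x))"
    if x: "x \<in> closure Om" for x w k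
  proof -
    have "linear (frechet_derivative ri (at (rf x)))"
      using ri_diff[OF x] frechet_derivative_works has_derivative_linear by blast
    from lin_expand[OF this, of w] show ?thesis
      using H1[OF x] by (simp add: pderiv_dir_def)
  qed
  have Fid: "F b x = axis b 1" if x: "x \<in> Om" for b x
  proof -
    have xc: "x \<in> closure Om" using x closure_subset by blast
    have rd: "(rf has_derivative frechet_derivative rf (at x)) (at x)"
      using assms(3,4) xc unfolding C1_on_def frechet_derivative_works by blast
    have id: "(ri \<circ> rf has_derivative (frechet_derivative ri (at (rf x)) \<circ> frechet_derivative rf (at x))) (at x)"
      using diff_chain_at[OF rd] ri_diff[OF xc] frechet_derivative_works by blast
    have "((\<lambda>u. u) has_derivative (frechet_derivative ri (at (rf x)) \<circ> frechet_derivative rf (at x))) (at x)"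
      by (rule has_derivative_transform_within_open[OF id \<open>open Om\<close> x])
         (use inv closure_subset in auto)
    hence eq: "frechet_derivative ri (at (rf x)) \<circ> frechet_derivative rf (at x) = (\<lambda>u. u)"
      using has_derivative_unique has_derivative_ident by blast
    have "F b x = frechet_derivative ri (at (rf x)) (frechet_derivative rf (at x) (axis b 1))"
      unfolding F_def by (simp add: vec_eq_iff Lexp[OF xc] pderiv_dir_def)
    also have "\<dots> = axis b 1" using eq by (metis comp_apply)
    finally show ?thesis .
  qed
  have Fcont: "continuous_on (closure Om) (F b)" for b
  proof -
    have "continuous_on U (pderiv_dir rf (axis b 1))"
      using assms(4) unfolding C1_on_def by simp
    hence c1: "continuous_on (closure Om) (pderiv_dir rf (axis b 1))"
      using assms(3) continuous_on_subset by blast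
    have c2: "continuous_on (closure Om) (p i k)" for i k
      using pc continuous_on_subset by blast
    show ?thesis unfolding F_def
      by (intro continuous_on_vec_lambda continuous_intros c2 continuous_on_component c1)
  qed
  have Fy: "F b y = axis b 1" for b
    using continuous_constant_on_closure[OF Fcont Fid y] .
  have "z$b = 0" for b
  proof -
    have "z$b = (\<Sum>k\<in>UNIV. z$k * (F b y)$k)"
      by (simp add: Fy axis_def if_distrib[of "\<lambda>u. _ * u"] cong: if_cong)
    also have "\<dots> = (\<Sum>k\<in>UNIV. \<Sum>i\<in>UNIV. z$k * ((pderiv_dir rf (axis b 1) y)$i * (c * p i k y)))"
      by (simp add: F_def sum_distrib_left)
    also have "\<dots> = (\<Sum>i\<in>UNIV. (pderiv_dir rf (axis b 1) y)$i * c * (\<Sum>k\<in>UNIV. p i k y * z$k))"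
      by (subst sum.swap) (simp add: sum_distrib_left mult_ac)
    also have "\<dots> = 0" using z by simp
    finally show ?thesis .
  qed
  thus ?thesis by (simp add: vec_eq_iff)
qed


lemma quad_eq:
  fixes q :: "'n::finite \<Rightarrow> 'n \<Rightarrow> real" and z :: "real^'n" and c :: real
  shows "(\<Sum>j\<in>UNIV. \<Sum>k\<in>UNIV. (\<Sum>i\<in>UNIV. c * q i j * (c * q i k)) * z $ j * z $ k)
        = c^2 * (\<Sum>i\<in>UNIV. (\<Sum>k\<in>UNIV. q i k * z$k)^2)"
proof -
  have "(\<Sum>j\<in>UNIV. \<Sum>k\<in>UNIV. (\<Sum>i\<in>UNIV. c * q i j * (c * q i k)) * z $ j * z $ k)
      = (\<Sum>j\<in>UNIV. \<Sum>k\<in>UNIV. \<Sum>i\<in>UNIV. c^2 * ((q i j * z$j) * (q i k * z$k)))"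
    by (simp add: sum_distrib_right sum_distrib_left power2_eq_square mult_ac)
  also have "\<dots> = (\<Sum>j\<in>UNIV. \<Sum>i\<in>UNIV. \<Sum>k\<in>UNIV. c^2 * ((q i j * z$j) * (q i k * z$k)))"
    by (rule sum.cong[OF refl], rule sum.swap)
  also have "\<dots> = (\<Sum>i\<in>UNIV. \<Sum>j\<in>UNIV. \<Sum>k\<in>UNIV. c^2 * ((q i j * z$j) * (q i k * z$k)))"
    by (rule sum.swap)
  also have "\<dots> = c^2 * (\<Sum>i\<in>UNIV. (\<Sum>k\<in>UNIV. q i k * z$k)^2)"
  proof -
    have sq: "(\<Sum>k\<in>UNIV. q i k * z$k)^2 = (\<Sum>j\<in>UNIV. \<Sum>k\<in>UNIV. (q i j * z$j) * (q i k * z$k))" for i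
      by (simp only: power2_eq_square sum_product)
    show ?thesis by (simp only: sq sum_distrib_left)
  qed
  finally show ?thesis .
qed

lemma scale_G:
  fixes p :: "'n::finite \<Rightarrow> 'n \<Rightarrow> real^'m \<Rightarrow> real" and u :: "real^'n" and c :: real
  shows "(\<Sum>i\<in>UNIV. (\<Sum>k\<in>UNIV. p i k y * (c *\<^sub>R u)$k)^2) = c^2 * (\<Sum>i\<in>UNIV. (\<Sum>k\<in>UNIV. p i k y * u$k)^2)"
proof -
  have eqc: "(\<Sum>k\<in>UNIV. p i k y * (c *\<^sub>R u)$k) = c * (\<Sum>k\<in>UNIV. p i k y * u$k)" for i
    by (simp add: sum_distrib_left mult_ac)
  show ?thesis by (simp only: eqc power_mult_distrib) (simp add: sum_distrib_left)
qed

theorem lemma3p3: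
  fixes Om :: "(real^'n) set"
    and r rinv :: "real \<Rightarrow> real^'n \<Rightarrow> real^'n"
    and h :: "real \<Rightarrow> real"
    and p :: "'n \<Rightarrow> 'n \<Rightarrow> real^'n \<Rightarrow> real"
    and \<theta> h0 h1 \<tau> T :: real
  assumes n3: "CARD('n) \<ge> 3"
    and O_bounded: "bounded Om" and O_open: "open Om" and O_bdry: "C2_boundary Om"
    and r_C1: "C1_on_set (UNIV \<times> closure Om) (\<lambda>(t, y). r t y)"
    and r_diffeo: "\<And>t. C2_diffeo_with_inverse (closure Om) (r t) (rinv t)"
    and rinv_t_diff: "\<And>x t. x \<in> r t ` closure Om \<Longrightarrow> (\<lambda>s. rinv s x) differentiable (at t)"
    and rinv_t_cont: "\<And>x. continuous_on {t. x \<in> r t ` closure Om}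
                              (\<lambda>t. vector_derivative (\<lambda>s. rinv s x) (at t))"
    and h_cont: "continuous_on UNIV h"
    and p_C1: "\<And>i k. C1_on UNIV (p i k)"
    and H1_eq: "\<And>t y i k. y \<in> closure Om \<Longrightarrow>
                   (pderiv_dir (rinv t) (axis i 1) (r t y)) $ k = h t * p i k y"
    and \<theta>_pos: "0 < \<theta>" and \<theta>_le1: "\<theta> \<le> 1"
    and h_hoelder: "\<exists>K. \<forall>s t. \<bar>h s - h t\<bar> \<le> K * \<bar>s - t\<bar> powr \<theta>"
    and h0_pos: "0 < h0" and h_bounds: "\<And>t. h0 \<le> h t \<and> h t \<le> h1"
    and \<tau>T: "\<tau> < T"
  shows "\<exists>C>0. \<forall>t\<in>{\<tau>..T}. \<forall>y\<in>closure Om. \<forall>z :: real^'n.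
           (\<Sum>j\<in>UNIV. \<Sum>k\<in>UNIV. coeff_a r rinv t y j k * z $ j * z $ k) \<ge> C * (norm z)\<^sup>2"
proof -
  define G where "G y z = (\<Sum>i\<in>UNIV. (\<Sum>k\<in>UNIV. p i k y * z$k)^2)" for y and z :: "real^'n"
  have pc: "continuous_on UNIV (p i k)" for i k
    using p_C1[of i k] unfolding C1_on_def
    by (meson continuous_at_imp_continuous_on differentiable_imp_continuous_within)
  obtain U where U: "open U" "closure Om \<subseteq> U" "C1_on U (r 0)"
    using r_diffeo[of 0] unfolding C2_diffeo_with_inverse_def C2_on_set_def C2_on_def by blast
  obtain V where V: "open V" "r 0 ` closure Om \<subseteq> V" "C1_on V (rinv 0)"
    using r_diffeo[of 0] unfolding C2_diffeo_with_inverse_def C2_on_set_def C2_on_def by blast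
  have inv0: "\<And>y. y \<in> closure Om \<Longrightarrow> rinv 0 (r 0 y) = y"
    using r_diffeo[of 0] unfolding C2_diffeo_with_inverse_def by blast
  have ri_diff: "\<And>y. y \<in> closure Om \<Longrightarrow> rinv 0 differentiable (at (r 0 y))"
    using V unfolding C1_on_def by blast
  have Gpos: "G y z > 0" if y: "y \<in> closure Om" and z: "z \<noteq> 0" for y z
  proof (rule ccontr)
    assume "\<not> G y z > 0"
    hence "G y z = 0" unfolding G_def
      by (metis (no_types, lifting) linorder_not_le order_antisym sum_nonneg zero_le_power2)
    hence "\<forall>i\<in>UNIV. (\<Sum>k\<in>UNIV. p i k y * z$k)^2 = 0" unfolding G_def
      by (subst sum_nonneg_eq_0_iff[symmetric]) auto
    hence "\<And>i. (\<Sum>k\<in>UNIV. p i k y * z$k) = 0" by simp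
    hence "z = 0"
      using invert_pos[where Om=Om and U=U and rf="r 0" and ri="rinv 0" and p=p and c="h 0" and y=y and z=z, OF O_open U(1,2,3) ri_diff inv0 H1_eq pc y] by blast
    with z show False by simp
  qed
  have Gcont: "continuous_on UNIV (\<lambda>yz. G (fst yz) (snd yz))"
    unfolding G_def
    by (intro continuous_intros continuous_on_compose2[OF pc] continuous_on_component) auto
  show ?thesis
  proof (cases "closure Om = {}")
    case True
    then show ?thesis by (intro exI[of _ 1]) auto
  next
    case False
    let ?S = "closure Om \<times> sphere (0::real^'n) 1"
    have cS: "compact ?S"
      using O_bounded by (intro compact_Times compact_sphere) (simp add: compact_closure)
    have neS: "?S \<noteq> {}"
    proof -
      obtain i :: 'n where True by blast
      have ax: "axis i (1::real) \<in> sphere 0 1" by simp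
      from False obtain y where "y \<in> closure Om" by (metis ex_in_conv)
      hence "(y, axis i 1) \<in> ?S" using ax by simp
      thus ?thesis by (metis empty_iff)
    qed
    have ctS: "continuous_on ?S (\<lambda>yz. G (fst yz) (snd yz))"
      using Gcont continuous_on_subset by blast
    obtain yz0 where yz0: "yz0 \<in> ?S" "\<And>w. w \<in> ?S \<Longrightarrow> G (fst yz0) (snd yz0) \<le> G (fst w) (snd w)"
      using continuous_attains_inf[OF cS neS ctS] by auto
    define m where "m = G (fst yz0) (snd yz0)"
    have mpos: "m > 0" unfolding m_def
      using yz0(1) by (intro Gpos) (auto simp: mem_Times_iff)
    have Gbound: "G y z \<ge> m * (norm z)^2" if y: "y \<in> closure Om" for y z
    proof (cases "z = 0")
      case True
      then show ?thesis by (simp add: G_def)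
    next
      case False
      define u where "u = z /\<^sub>R norm z"
      have u: "u \<in> sphere 0 1" using False by (simp add: u_def)
      have zu: "z = norm z *\<^sub>R u" using False by (simp add: u_def)
      have "G y z = (norm z)^2 * G y u"
        unfolding G_def by (subst zu) (rule scale_G)
      moreover have "m \<le> G y u" unfolding m_def using yz0(2)[of "(y,u)"] y u by auto
      ultimately show ?thesis by (metis mult.commute mult_right_mono zero_le_power2)
    qed
    show ?thesis
    proof (intro exI[of _ "h0^2 * m"] conjI ballI allI)
      show "0 < h0^2 * m" using h0_pos mpos by simp
      fix t y and z :: "real^'n"
      assume y: "y \<in> closure Om"
      have ca: "coeff_a r rinv t y j k = (\<Sum>i\<in>UNIV. h t * p i j y * (h t * p i k y))" for j k
        unfolding coeff_a_def using H1_eq[OF y] by simp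
      have eq: "(\<Sum>j\<in>UNIV. \<Sum>k\<in>UNIV. coeff_a r rinv t y j k * z $ j * z $ k) = (h t)^2 * G y z"
        unfolding ca G_def by (rule quad_eq)
      have "h0^2 \<le> (h t)^2" using h_bounds[of t] h0_pos by (intro power_mono) auto
      moreover have "m * (norm z)^2 \<le> G y z" using Gbound[OF y] .
      ultimately have "h0^2 * (m * (norm z)^2) \<le> (h t)^2 * G y z"
        using mpos by (intro mult_mono) auto
      thus "h0^2 * m * (norm z)^2 \<le> (\<Sum>j\<in>UNIV. \<Sum>k\<in>UNIV. coeff_a r rinv t y j k * z $ j * z $ k)"
        using eq by (simp add: mult.assoc)
    qed
  qed
qed

end
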